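(* Let $n$ be a nonnegative integer and let \[ T_n(a,b,c)=(1+a-c)_n(c)_n\,{}_4F_3\!\left(\left.{-n,\frac{a}{2},\frac{a+1}{2},b \atop a,1+a-c,c}\right|4\right). \] Define \[ U_n(x,y,z)=T_n\!\left(x-y-z,\ \frac{1+3x-y-z-2n}{2},\ \frac{1+x+y-3z}{2}\right). \] Then $U_n$ is a symmetric function of $x,y,z$, i.e. it is invariant under all six permutations of $x,y,z$: \[ U_n(x,y,z)=U_n(x,z,y)=U_n(y,x,z)=U_n(y,z,x)=U_n(z,x,y)=U_n(z,y,x). \] Moreover, these six invariances $U_n(x,y,z)=U_n(x,y,z)$, $U_n(x,y,z)=U_n(x,z,y)$, $U_n(x,y,z)=U_n(y,x,z)$, $U_n(x,y,z)=U_n(y,z,x)$, $U_n(x,y,z)=U_n(z,x,y)$, $U_n(x,y,z)=U_n(z,y,x)$ correspond, respectively, to the following six invariances of $T_n$: \begin{align*} &T_n(a,b,c)=T_n(a,b,c),\\ &T_n(a,b,c)=T_n(a,b,1+a-c),\\ &T_n(a,b,c)=T_n(c-b-n,c-a-n,c),\\ &T_n(a,b,c)=T_n(c-b-n,c-a-n,1-b-n),\\ &T_n(a,b,c)=T_n(1+a-b-c-n,1-c-n,1+a-c),\\ &T_n(a,b,c)=T_n(1+a-b-c-n,1-c-n,1-b-n). \end{align*}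
   Context: Here $(a)_n=a(a+1)\cdots(a+n-1)$ for $n>0$ and $(a)_0=1$ is the rising factorial, and ${}_{p}F_q\!\left(\left.{a_1,\ldots,a_p \atop b_1,\ldots,b_q}\right|z\right)=\sum_{k\ge 0}\frac{(a_1)_k\cdots(a_p)_k}{k!(b_1)_k\cdots(b_q)_k}z^k$ is the generalized hypergeometric series; the ${}_4F_3(4)$ series above terminates since one numerator parameter is $-n$. Denominator parameters are assumed not to be nonpositive integers. The six invariances of $T_n$ listed form a group isomorphic to $S_3$, generated by the trivial invariance $T_n(a,b,c)=T_n(a,b,1+a-c)$ and the nontrivial one $T_n(a,b,c)=T_n(c-b-n,c-a-n,c)$. *)

theory Defs
  imports Complex_Main "HOL-Library.Nonpos_Ints"
begin

definition hyp_term :: "complex list \<Rightarrow> complex list \<Rightarrow> complex \<Rightarrow> nat \<Rightarrow> complex" where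
  "hyp_term as bs z k =
     (\<Prod>a\<leftarrow>as. pochhammer a k) / (fact k * (\<Prod>b\<leftarrow>bs. pochhammer b k)) * z ^ k"

text \<open>The 4F3 series of T_n; it terminates since one numerator parameter is -n
  (all terms with k > n vanish), so it is the finite sum over k = 0..n.\<close>
definition F43_T :: "nat \<Rightarrow> complex \<Rightarrow> complex \<Rightarrow> complex \<Rightarrow> complex" where
  "F43_T n a b c =
     (\<Sum>k\<le>n. hyp_term [- of_nat n, a/2, (a+1)/2, b] [a, 1+a-c, c] 4 k)"

definition T :: "nat \<Rightarrow> complex \<Rightarrow> complex \<Rightarrow> complex \<Rightarrow> complex" where
  "T n a b c = pochhammer (1+a-c) n * pochhammer c n * F43_T n a b c"

definition T_ok :: "complex \<Rightarrow> complex \<Rightarrow> bool" where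
  "T_ok a c \<longleftrightarrow> a \<notin> \<int>\<^sub>\<le>\<^sub>0 \<and> 1+a-c \<notin> \<int>\<^sub>\<le>\<^sub>0 \<and> c \<notin> \<int>\<^sub>\<le>\<^sub>0"

definition Upar :: "nat \<Rightarrow> complex \<Rightarrow> complex \<Rightarrow> complex \<Rightarrow> complex \<times> complex \<times> complex" where
  "Upar n x y z = (x - y - z, (1 + 3*x - y - z - 2 * of_nat n) / 2, (1 + x + y - 3*z) / 2)"

definition U :: "nat \<Rightarrow> complex \<Rightarrow> complex \<Rightarrow> complex \<Rightarrow> complex" where
  "U n x y z = (case Upar n x y z of (a, b, c) \<Rightarrow> T n a b c)"

definition U_ok :: "nat \<Rightarrow> complex \<Rightarrow> complex \<Rightarrow> complex \<Rightarrow> bool" where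
  "U_ok n x y z = (case Upar n x y z of (a, b, c) \<Rightarrow> T_ok a c)"

end

theory Submission
  imports Defs
begin

definition Pp :: "nat \<Rightarrow> complex \<Rightarrow> complex \<Rightarrow> complex \<Rightarrow> complex" where
"Pp n a b c = (\<Sum>k\<le>n. (-1)^k * of_nat (n choose k) * pochhammer (a + of_nat k) k * pochhammer b k
   * pochhammer (1+a-c+of_nat k) (n-k) * pochhammer (c + of_nat k) (n-k))"

definition Sd :: "nat \<Rightarrow> complex \<Rightarrow> complex \<Rightarrow> complex \<Rightarrow> complex" where
"Sd n u v c = (\<Sum>(k,j)\<in>Sigma {..n} (\<lambda>k. {..k}). (-1)^(n+j) * of_nat (n choose k) * of_nat (k choose j)
   * pochhammer (c + of_nat j) (n-j) * pochhammer u k * pochhammer v (n-k+j))"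

lemma term_eq:
  fixes a b c :: complex
  assumes "k \<le> n"
  shows "(-1)^k * of_nat (n choose k) * pochhammer (a + of_nat k) k * pochhammer b k
   * pochhammer (1+a-c+of_nat k) (n-k) * pochhammer (c + of_nat k) (n-k)
   = (\<Sum>j\<le>k. (-1)^(n+j) * of_nat (n choose k) * of_nat (k choose j)
   * pochhammer (c + of_nat j) (n-j) * pochhammer b k * pochhammer (c-a-of_nat n) (n-k+j))"
proof -
  define e where "e = n - k"
  have n: "n = k + e" using assms by (simp add: e_def)
  have ne: "n - k = e" by (simp add: n)
  define B where "B = c - a - of_nat n"
  have F1: "pochhammer (1+a-c+of_nat k) e = (-1)^e * pochhammer B e"
  proof -
    have eq: "1+a-c+of_nat k = - (B + of_nat e - 1)" by (simp add: B_def n)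
    show ?thesis unfolding eq pochhammer_minus by simp
  qed
  have F2: "pochhammer (a + of_nat k) k = (-1)^k * (\<Sum>j\<le>k. of_nat (k choose j) *
       pochhammer (B + of_nat e) j * pochhammer (1-c-of_nat k) (k-j))"
  proof -
    have "pochhammer (a + of_nat k) k = pochhammer (- (- (a + of_nat k))) k" by (simp only: minus_minus)
    also have "\<dots> = (-1)^k * pochhammer (- (a + of_nat k) - of_nat k + 1) k"
      by (rule pochhammer_minus)
    also have "- (a + of_nat k) - of_nat k + 1 = (B + of_nat e) + (1 - c - of_nat k)"
      by (simp add: B_def n)
    finally show ?thesis by (simp add: pochhammer_binomial_sum)
  qed
  have F3: "(-1)^k * of_nat (n choose k) * ((-1)^k * (of_nat (k choose j) *
       pochhammer (B + of_nat e) j * pochhammer (1-c-of_nat k) (k-j))) * pochhammer b k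
       * ((-1)^e * pochhammer B e) * pochhammer (c + of_nat k) e
     = (-1)^(n+j) * of_nat (n choose k) * of_nat (k choose j)
   * pochhammer (c + of_nat j) (n-j) * pochhammer b k * pochhammer B (n-k+j)" if "j \<le> k" for j
  proof -
    define d where "d = k - j"
    have k: "k = j + d" using that by (simp add: d_def)
    have G1: "pochhammer B e * pochhammer (B + of_nat e) j = pochhammer B (n-k+j)"
      using pochhammer_product'[of B e j] by (simp add: n)
    have G2: "pochhammer (1-c-of_nat k) (k-j) = (-1)^d * pochhammer (c + of_nat j) d"
    proof -
      have eq: "1-c-of_nat k = - (c + of_nat k - 1)" by simp
      show ?thesis unfolding eq pochhammer_minus by (simp add: k)
    qed
    have G3: "pochhammer (c + of_nat j) d * pochhammer (c + of_nat k) e = pochhammer (c + of_nat j) (n-j)"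
      using pochhammer_product'[of "c + of_nat j" d e] by (simp add: n k add_ac)
    have S: "((-1::complex)^k * (-1)^k) * (-1)^e * (-1)^d = (-1)^(n+j)"
    proof -
      have s1: "(-1::complex)^k * (-1)^k = 1" by (simp add: power_mult_distrib[symmetric])
      have s2: "(-1::complex)^j * (-1)^j = 1" by (simp add: power_mult_distrib[symmetric])
      have "n + j = (j + j) + (e + d)" by (simp add: n k)
      then have "(-1::complex)^(n+j) = ((-1)^j * (-1)^j) * ((-1)^e * (-1)^d)"
        by (simp only: power_add)
      then show ?thesis by (simp only: s1 s2 mult_1_left)
    qed
    have "(-1)^k * of_nat (n choose k) * ((-1)^k * (of_nat (k choose j) *
       pochhammer (B + of_nat e) j * pochhammer (1-c-of_nat k) (k-j))) * pochhammer b k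
       * ((-1)^e * pochhammer B e) * pochhammer (c + of_nat k) e
       = (((-1::complex)^k * (-1)^k) * (-1)^e * (-1)^d) * of_nat (n choose k) * of_nat (k choose j)
       * (pochhammer (c + of_nat j) d * pochhammer (c + of_nat k) e) * pochhammer b k
       * (pochhammer B e * pochhammer (B + of_nat e) j)"
      unfolding G2 by (simp only: mult_ac)
    also have "\<dots> = (-1)^(n+j) * of_nat (n choose k) * of_nat (k choose j)
       * pochhammer (c + of_nat j) (n-j) * pochhammer b k * pochhammer B (n-k+j)"
      by (simp only: S G1 G3)
    finally show ?thesis .
  qed
  have "(-1)^k * of_nat (n choose k) * pochhammer (a + of_nat k) k * pochhammer b k
   * pochhammer (1+a-c+of_nat k) (n-k) * pochhammer (c + of_nat k) (n-k)
    = (-1)^k * of_nat (n choose k) * ((-1)^k * (\<Sum>j\<le>k. of_nat (k choose j) *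
       pochhammer (B + of_nat e) j * pochhammer (1-c-of_nat k) (k-j))) * pochhammer b k
       * ((-1)^e * pochhammer B e) * pochhammer (c + of_nat k) e"
    by (simp only: ne F1 F2)
  also have "\<dots> = (\<Sum>j\<le>k. (-1)^k * of_nat (n choose k) * ((-1)^k * (of_nat (k choose j) *
       pochhammer (B + of_nat e) j * pochhammer (1-c-of_nat k) (k-j))) * pochhammer b k
       * ((-1)^e * pochhammer B e) * pochhammer (c + of_nat k) e)"
    by (simp add: sum_distrib_left sum_distrib_right)
  also have "\<dots> = (\<Sum>j\<le>k. (-1)^(n+j) * of_nat (n choose k) * of_nat (k choose j)
   * pochhammer (c + of_nat j) (n-j) * pochhammer b k * pochhammer B (n-k+j))"
    by (rule sum.cong) (auto simp: F3)
  finally show ?thesis by (simp add: B_def)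
qed


lemma Pp_Sd: "Pp n a b c = Sd n b (c - a - of_nat n) c"
proof -
  have "Pp n a b c = (\<Sum>k\<le>n. \<Sum>j\<le>k. (-1)^(n+j) * of_nat (n choose k) * of_nat (k choose j)
   * pochhammer (c + of_nat j) (n-j) * pochhammer b k * pochhammer (c-a-of_nat n) (n-k+j))"
    unfolding Pp_def by (rule sum.cong) (simp_all add: term_eq)
  also have "\<dots> = Sd n b (c - a - of_nat n) c"
    unfolding Sd_def by (subst sum.Sigma) auto
  finally show ?thesis .
qed

lemma choose_sym3:
  assumes "j \<le> k" "k \<le> n"
  shows "(n choose (n - k + j)) * ((n - k + j) choose j) = (n choose k) * (k choose j)"
proof -
  have "(n choose k) * (k choose j) = (n choose j) * ((n - j) choose (k - j))"
    using choose_mult[of j k n] assms by simp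
  moreover have "(n choose (n - k + j)) * ((n - k + j) choose j) = (n choose j) * ((n - j) choose (n - k + j - j))"
    using choose_mult[of j "n - k + j" n] assms by simp
  moreover have "(n - j) choose (n - k + j - j) = (n - j) choose (k - j)"
    using binomial_symmetric[of "k - j" "n - j"] assms by simp
  ultimately show ?thesis by simp
qed

lemma Sd_sym: "Sd n u v c = Sd n v u c"
  unfolding Sd_def
proof (rule sum.reindex_bij_witness[where i="\<lambda>(k,j). (n - k + j, j)" and j="\<lambda>(k,j). (n - k + j, j)"])
  fix x assume x: "x \<in> Sigma {..n} (\<lambda>k. {..k})"
  obtain k j where kj: "x = (k, j)" "j \<le> k" "k \<le> n" using x by auto
  show "(case (case x of (k, j) \<Rightarrow> (n - k + j, j)) of (k, j) \<Rightarrow> (n - k + j, j)) = x"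
    using kj by auto
  show "(case x of (k, j) \<Rightarrow> (n - k + j, j)) \<in> Sigma {..n} (\<lambda>k. {..k})"
    using kj by auto
  have cc: "(of_nat (n choose (n - k + j)) :: complex) * of_nat ((n - k + j) choose j)
      = of_nat (n choose k) * of_nat (k choose j)"
    using choose_sym3[OF kj(2,3)] by (metis of_nat_mult)
  have nn: "n - (n - k + j) + j = k" using kj by simp
  show "(case case x of (k, j) \<Rightarrow> (n - k + j, j) of
        (k, j) \<Rightarrow> (- 1) ^ (n + j) * of_nat (n choose k) * of_nat (k choose j) * pochhammer (c + of_nat j) (n - j) *
           pochhammer v k * pochhammer u (n - k + j)) =
       (case x of (k, j) \<Rightarrow> (- 1) ^ (n + j) * of_nat (n choose k) * of_nat (k choose j) * pochhammer (c + of_nat j) (n - j) *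
           pochhammer u k * pochhammer v (n - k + j))"
    using kj cc nn by (simp add: mult_ac)
qed auto

lemma Pp_swap: "Pp n a b c = Pp n a b (1 + a - c)"
  unfolding Pp_def
  by (rule sum.cong) (simp_all add: mult_ac)

lemma Pp_main: "Pp n a b c = Pp n (c - b - of_nat n) (c - a - of_nat n) c"
  by (simp add: Pp_Sd Sd_sym)


lemma poch_nz: "(x::complex) \<notin> \<int>\<^sub>\<le>\<^sub>0 \<Longrightarrow> pochhammer x k \<noteq> 0"
  by (auto simp: pochhammer_eq_0_iff)

lemma poch_neg_nat: "pochhammer (- of_nat n :: complex) k = (-1)^k * of_nat (n choose k) * fact k"
proof -
  have "(of_nat n gchoose k :: complex) = (- 1) ^ k * pochhammer (- of_nat n) k / fact k"
    by (rule gbinomial_pochhammer)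
  then have "(-1)^k * of_nat (n choose k) * fact k = (-1)^k * ((- 1) ^ k * pochhammer (- of_nat n :: complex) k)"
    by (simp add: binomial_gbinomial)
  also have "\<dots> = pochhammer (- of_nat n :: complex) k"
    by (simp flip: power_mult_distrib mult.assoc)
  finally show ?thesis ..
qed

lemma poch_half: "pochhammer (a/2) k * pochhammer ((a+1)/2) k * 4^k
   = pochhammer (a::complex) k * pochhammer (a + of_nat k) k"
proof -
  have q1: "2 * (a/2) = a" by simp
  have q2: "a/2+1/2 = (a+1)/2" by (simp add: add_divide_distrib)
  have e1: "pochhammer a (2*k) = of_nat (2^(2*k)) * pochhammer (a/2) k * pochhammer ((a+1)/2) k"
    using pochhammer_double[of "a/2" k] by (simp only: q1 q2)
  have e2: "pochhammer a (2*k) = pochhammer a k * pochhammer (a + of_nat k) k"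
    using pochhammer_product'[of a k k] by (simp only: mult_2)
  have e3: "(of_nat (2^(2*k)) :: complex) = 4^k"
    by (simp add: power_mult)
  show ?thesis using e1 e2 e3 by (simp add: mult_ac)
qed

lemma cancel1: "(f::complex) \<noteq> 0 \<Longrightarrow> w * f / (f * g) = w / g"
  by (cases "g = 0") simp_all

lemma cancel2: "(y::complex) \<noteq> 0 \<Longrightarrow> z \<noteq> 0 \<Longrightarrow> y*y'*(z*z')*(w/(y*z)) = w*y'*z'"
  by (simp add: field_simps)

lemma T_Pp:
  assumes "T_ok a c"
  shows "T n a b c = Pp n a b c"
proof -
  have nz: "pochhammer a k \<noteq> 0" "pochhammer (1+a-c) k \<noteq> 0" "pochhammer c k \<noteq> 0" for k
    using assms poch_nz unfolding T_ok_def by auto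
  have "pochhammer (1+a-c) n * pochhammer c n * hyp_term [- of_nat n, a/2, (a+1)/2, b] [a, 1+a-c, c] 4 k
    = (-1)^k * of_nat (n choose k) * pochhammer (a + of_nat k) k * pochhammer b k
   * pochhammer (1+a-c+of_nat k) (n-k) * pochhammer (c + of_nat k) (n-k)" if k: "k \<le> n" for k
  proof -
    have h1: "pochhammer (1+a-c) n = pochhammer (1+a-c) k * pochhammer (1+a-c+of_nat k) (n-k)"
      by (rule pochhammer_product[OF k])
    have h2: "pochhammer c n = pochhammer c k * pochhammer (c+of_nat k) (n-k)"
      by (rule pochhammer_product[OF k])
    define W where "W = (-1)^k * of_nat (n choose k) * pochhammer b k * pochhammer (a + of_nat k) k"
    have fnz: "fact k * pochhammer a k \<noteq> (0::complex)" using nz by simp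
    have hyp: "hyp_term [- of_nat n, a/2, (a+1)/2, b] [a, 1+a-c, c] 4 k
      = (pochhammer (- of_nat n) k * (pochhammer (a/2) k * (pochhammer ((a+1)/2) k * pochhammer b k))) * 4^k
        / ((fact k * pochhammer a k) * (pochhammer (1+a-c) k * pochhammer c k))"
      unfolding hyp_term_def by (simp only: list.map prod_list.Cons prod_list.Nil mult_1_right
        times_divide_eq_left mult.assoc)
    have N4: "(pochhammer (- of_nat n) k * (pochhammer (a/2) k * (pochhammer ((a+1)/2) k * pochhammer b k))) * 4^k
       = W * (fact k * pochhammer a k)"
    proof -
      have "(pochhammer (- of_nat n) k * (pochhammer (a/2) k * (pochhammer ((a+1)/2) k * pochhammer b k))) * 4^k
        = pochhammer (- of_nat n) k * pochhammer b k * (pochhammer (a/2) k * pochhammer ((a+1)/2) k * 4^k)"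
        by (simp only: mult_ac)
      also have "\<dots> = W * (fact k * pochhammer a k)"
        unfolding poch_neg_nat poch_half W_def by (simp only: mult_ac)
      finally show ?thesis .
    qed
    have h3: "hyp_term [- of_nat n, a/2, (a+1)/2, b] [a, 1+a-c, c] 4 k
       = W / (pochhammer (1+a-c) k * pochhammer c k)"
      unfolding hyp N4 using fnz by (rule cancel1)
    show ?thesis unfolding h1 h2 h3 cancel2[OF nz(2) nz(3)] W_def by (simp only: mult_ac)
  qed
  then show ?thesis
    unfolding T_def Pp_def F43_T_def sum_distrib_left by (intro sum.cong refl) simp
qed


lemma Pp_args: "x = x' \<Longrightarrow> y = y' \<Longrightarrow> z = z' \<Longrightarrow> Pp n x y z = Pp n x' y' z'"
  by simp

lemma Pp_all:
  "Pp n a b c = Pp n a b (1+a-c) \<and>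
   Pp n a b c = Pp n (c-b-of_nat n) (c-a-of_nat n) c \<and>
   Pp n a b c = Pp n (c-b-of_nat n) (c-a-of_nat n) (1-b-of_nat n) \<and>
   Pp n a b c = Pp n (1+a-b-c-of_nat n) (1-c-of_nat n) (1+a-c) \<and>
   Pp n a b c = Pp n (1+a-b-c-of_nat n) (1-c-of_nat n) (1-b-of_nat n)"
proof -
  have e1: "Pp n a b c = Pp n a b (1+a-c)" by (rule Pp_swap)
  have e2: "Pp n a b c = Pp n (c-b-of_nat n) (c-a-of_nat n) c" by (rule Pp_main)
  have e3: "Pp n a b c = Pp n (c-b-of_nat n) (c-a-of_nat n) (1-b-of_nat n)"
  proof -
    have "Pp n (c-b-of_nat n) (c-a-of_nat n) c = Pp n (c-b-of_nat n) (c-a-of_nat n) (1 + (c-b-of_nat n) - c)"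
      by (rule Pp_swap)
    also have "\<dots> = Pp n (c-b-of_nat n) (c-a-of_nat n) (1-b-of_nat n)"
      by (rule Pp_args) simp_all
    finally show ?thesis using e2 by simp
  qed
  have e4: "Pp n a b c = Pp n (1+a-b-c-of_nat n) (1-c-of_nat n) (1+a-c)"
  proof -
    have "Pp n a b (1+a-c) = Pp n ((1+a-c)-b-of_nat n) ((1+a-c)-a-of_nat n) (1+a-c)"
      by (rule Pp_main)
    also have "\<dots> = Pp n (1+a-b-c-of_nat n) (1-c-of_nat n) (1+a-c)"
      by (rule Pp_args) simp_all
    finally show ?thesis using e1 by simp
  qed
  have e5: "Pp n a b c = Pp n (1+a-b-c-of_nat n) (1-c-of_nat n) (1-b-of_nat n)"
  proof -
    have "Pp n (1+a-b-c-of_nat n) (1-c-of_nat n) (1+a-c)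
        = Pp n (1+a-b-c-of_nat n) (1-c-of_nat n) (1 + (1+a-b-c-of_nat n) - (1+a-c))"
      by (rule Pp_swap)
    also have "\<dots> = Pp n (1+a-b-c-of_nat n) (1-c-of_nat n) (1-b-of_nat n)"
      by (rule Pp_args) simp_all
    finally show ?thesis using e4 by simp
  qed
  show ?thesis using e1 e2 e3 e4 e5 by blast
qed

lemma Upar_corr:
  assumes "Upar n x y z = (a, b, c)"
  shows "Upar n x z y = (a, b, 1+a-c) \<and>
      Upar n y x z = (c-b-of_nat n, c-a-of_nat n, c) \<and>
      Upar n y z x = (c-b-of_nat n, c-a-of_nat n, 1-b-of_nat n) \<and>
      Upar n z x y = (1+a-b-c-of_nat n, 1-c-of_nat n, 1+a-c) \<and>
      Upar n z y x = (1+a-b-c-of_nat n, 1-c-of_nat n, 1-b-of_nat n)"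
proof -
  have a: "a = x - y - z" and b: "b = (1 + 3*x - y - z - 2 * of_nat n) / 2"
    and c: "c = (1 + x + y - 3*z) / 2"
    using assms by (auto simp: Upar_def)
  show ?thesis unfolding Upar_def a b c by (simp add: field_simps)
qed

theorem theorem3p2:
  fixes n :: nat
  shows
  \<comment> \<open>U_n is symmetric (wherever all six parameter triples are admissible)\<close>
  "(\<forall>x y z. U_ok n x y z \<and> U_ok n x z y \<and> U_ok n y x z \<and> U_ok n y z x \<and>
        U_ok n z x y \<and> U_ok n z y x \<longrightarrow>
      U n x y z = U n x z y \<and> U n x y z = U n y x z \<and> U n x y z = U n y z x \<and>
      U n x y z = U n z x y \<and> U n x y z = U n z y x)
   \<and>
  \<comment> \<open>the six invariances of T_n\<close>
   (\<forall>a b c. T_ok a c \<and> T_ok a (1+a-c) \<and> T_ok (c-b-of_nat n) c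
        \<and> T_ok (c-b-of_nat n) (1-b-of_nat n) \<and> T_ok (1+a-b-c-of_nat n) (1+a-c)
        \<and> T_ok (1+a-b-c-of_nat n) (1-b-of_nat n) \<longrightarrow>
      T n a b c = T n a b c \<and>
      T n a b c = T n a b (1+a-c) \<and>
      T n a b c = T n (c-b-of_nat n) (c-a-of_nat n) c \<and>
      T n a b c = T n (c-b-of_nat n) (c-a-of_nat n) (1-b-of_nat n) \<and>
      T n a b c = T n (1+a-b-c-of_nat n) (1-c-of_nat n) (1+a-c) \<and>
      T n a b c = T n (1+a-b-c-of_nat n) (1-c-of_nat n) (1-b-of_nat n))
   \<and>
  \<comment> \<open>correspondence: permuting (x,y,z) transforms the T-parameters (a,b,c) as listed\<close>
   (\<forall>x y z a b c. Upar n x y z = (a, b, c) \<longrightarrow>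
      Upar n x y z = (a, b, c) \<and>
      Upar n x z y = (a, b, 1+a-c) \<and>
      Upar n y x z = (c-b-of_nat n, c-a-of_nat n, c) \<and>
      Upar n y z x = (c-b-of_nat n, c-a-of_nat n, 1-b-of_nat n) \<and>
      Upar n z x y = (1+a-b-c-of_nat n, 1-c-of_nat n, 1+a-c) \<and>
      Upar n z y x = (1+a-b-c-of_nat n, 1-c-of_nat n, 1-b-of_nat n))"
  proof (intro conjI)
  show corr: "\<forall>x y z a b c. Upar n x y z = (a, b, c) \<longrightarrow>
      Upar n x y z = (a, b, c) \<and>
      Upar n x z y = (a, b, 1+a-c) \<and>
      Upar n y x z = (c-b-of_nat n, c-a-of_nat n, c) \<and>
      Upar n y z x = (c-b-of_nat n, c-a-of_nat n, 1-b-of_nat n) \<and>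
      Upar n z x y = (1+a-b-c-of_nat n, 1-c-of_nat n, 1+a-c) \<and>
      Upar n z y x = (1+a-b-c-of_nat n, 1-c-of_nat n, 1-b-of_nat n)"
    using Upar_corr by blast
  show "\<forall>a b c. T_ok a c \<and> T_ok a (1+a-c) \<and> T_ok (c-b-of_nat n) c
        \<and> T_ok (c-b-of_nat n) (1-b-of_nat n) \<and> T_ok (1+a-b-c-of_nat n) (1+a-c)
        \<and> T_ok (1+a-b-c-of_nat n) (1-b-of_nat n) \<longrightarrow>
      T n a b c = T n a b c \<and>
      T n a b c = T n a b (1+a-c) \<and>
      T n a b c = T n (c-b-of_nat n) (c-a-of_nat n) c \<and>
      T n a b c = T n (c-b-of_nat n) (c-a-of_nat n) (1-b-of_nat n) \<and>
      T n a b c = T n (1+a-b-c-of_nat n) (1-c-of_nat n) (1+a-c) \<and>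
      T n a b c = T n (1+a-b-c-of_nat n) (1-c-of_nat n) (1-b-of_nat n)"
  proof (intro allI impI)
    fix a b c
    assume oks: "T_ok a c \<and> T_ok a (1+a-c) \<and> T_ok (c-b-of_nat n) c
        \<and> T_ok (c-b-of_nat n) (1-b-of_nat n) \<and> T_ok (1+a-b-c-of_nat n) (1+a-c)
        \<and> T_ok (1+a-b-c-of_nat n) (1-b-of_nat n)"
    then have tt: "T n a b c = Pp n a b c" "T n a b (1+a-c) = Pp n a b (1+a-c)"
      "T n (c-b-of_nat n) (c-a-of_nat n) c = Pp n (c-b-of_nat n) (c-a-of_nat n) c"
      "T n (c-b-of_nat n) (c-a-of_nat n) (1-b-of_nat n) = Pp n (c-b-of_nat n) (c-a-of_nat n) (1-b-of_nat n)"
      "T n (1+a-b-c-of_nat n) (1-c-of_nat n) (1+a-c) = Pp n (1+a-b-c-of_nat n) (1-c-of_nat n) (1+a-c)"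
      "T n (1+a-b-c-of_nat n) (1-c-of_nat n) (1-b-of_nat n) = Pp n (1+a-b-c-of_nat n) (1-c-of_nat n) (1-b-of_nat n)"
      using T_Pp by blast+
    show "T n a b c = T n a b c \<and>
      T n a b c = T n a b (1+a-c) \<and>
      T n a b c = T n (c-b-of_nat n) (c-a-of_nat n) c \<and>
      T n a b c = T n (c-b-of_nat n) (c-a-of_nat n) (1-b-of_nat n) \<and>
      T n a b c = T n (1+a-b-c-of_nat n) (1-c-of_nat n) (1+a-c) \<and>
      T n a b c = T n (1+a-b-c-of_nat n) (1-c-of_nat n) (1-b-of_nat n)"
      unfolding tt using Pp_all[of n a b c] by blast
  qed
  show "\<forall>x y z. U_ok n x y z \<and> U_ok n x z y \<and> U_ok n y x z \<and> U_ok n y z x \<and>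
        U_ok n z x y \<and> U_ok n z y x \<longrightarrow>
      U n x y z = U n x z y \<and> U n x y z = U n y x z \<and> U n x y z = U n y z x \<and>
      U n x y z = U n z x y \<and> U n x y z = U n z y x"
  proof (intro allI impI)
    fix x y z
    assume ok: "U_ok n x y z \<and> U_ok n x z y \<and> U_ok n y x z \<and> U_ok n y z x \<and>
        U_ok n z x y \<and> U_ok n z y x"
    obtain a b c where abc: "Upar n x y z = (a, b, c)" by (cases "Upar n x y z") auto
    note cr = Upar_corr[OF abc]
    have oks: "T_ok a c" "T_ok a (1+a-c)" "T_ok (c-b-of_nat n) c"
        "T_ok (c-b-of_nat n) (1-b-of_nat n)" "T_ok (1+a-b-c-of_nat n) (1+a-c)"
        "T_ok (1+a-b-c-of_nat n) (1-b-of_nat n)"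
      using ok abc cr unfolding U_ok_def by simp_all
    have Us: "U n x y z = T n a b c" "U n x z y = T n a b (1+a-c)"
      "U n y x z = T n (c-b-of_nat n) (c-a-of_nat n) c"
      "U n y z x = T n (c-b-of_nat n) (c-a-of_nat n) (1-b-of_nat n)"
      "U n z x y = T n (1+a-b-c-of_nat n) (1-c-of_nat n) (1+a-c)"
      "U n z y x = T n (1+a-b-c-of_nat n) (1-c-of_nat n) (1-b-of_nat n)"
      using abc cr unfolding U_def by simp_all
    show "U n x y z = U n x z y \<and> U n x y z = U n y x z \<and> U n x y z = U n y z x \<and>
      U n x y z = U n z x y \<and> U n x y z = U n z y x"
      unfolding Us T_Pp[OF oks(1)] T_Pp[OF oks(2)] T_Pp[OF oks(3)] T_Pp[OF oks(4)]
        T_Pp[OF oks(5)] T_Pp[OF oks(6)]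
      using Pp_all[of n a b c] by blast
  qed
qed

end
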